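(* Let $R:X\leftrightarrow\mathcal{P}Y$, $S:Y\leftrightarrow\mathcal{P}Z$, $T:Z\leftrightarrow\mathcal{P}W$ be multirelations and suppose $R$ is inner deterministic. Then (1) $R\ast S=R\,1_Y^{\smile}\,S$; (2) $R\ast(S\ast T)=(R\ast S)\ast T$.
   Context: Relations $R\subseteq X\times Y$ are written $R:X\leftrightarrow Y$; composition $RS$ is diagrammatic relational composition and $R^{\smile}$ is the converse. A multirelation is a relation $X\leftrightarrow\mathcal{P}Y$. $1_Y=\{(b,\{b\})\mid b\in Y\}$. $R$ is inner deterministic if every $(a,B)\in R$ has $B$ a singleton. The Peleg composition of $R:X\leftrightarrow\mathcal{P}Y$ and $S:Y\leftrightarrow\mathcal{P}Z$ is $R\ast S=\{(a,C)\mid\exists B.\ (a,B)\in R\wedge\exists f:Y\to\mathcal{P}Z.\ (\forall b\in B.\ (b,f(b))\in S)\wedge C=\bigcup_{b\in B}f(b)\}$. *)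

theory Defs
  imports Main
begin

text \<open>The ground sets X, Y, Z, W are the (whole) types 'a, 'b, 'c, 'd.
  Relational composition R S (diagrammatic) is Isabelle's relcomp R O S,
  converse is converse (R^-1).\<close>

definition mr_id :: "('b \<times> 'b set) set" where
  "mr_id = {(b, {b}) | b. True}"

definition inner_det :: "('a \<times> 'b set) set \<Rightarrow> bool" where
  "inner_det R \<longleftrightarrow> (\<forall>a B. (a, B) \<in> R \<longrightarrow> (\<exists>b. B = {b}))"

definition peleg_comp :: "('a \<times> 'b set) set \<Rightarrow> ('b \<times> 'c set) set \<Rightarrow> ('a \<times> 'c set) set"
  (infixl "\<star>" 75) where
  "R \<star> S = {(a, C) | a C. \<exists>B. (a, B) \<in> R \<and>
      (\<exists>f :: 'b \<Rightarrow> 'c set. (\<forall>b\<in>B. (b, f b) \<in> S) \<and> C = (\<Union>b\<in>B. f b))}"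

end

theory Submission
  imports Defs
begin

lemma key:
  assumes "inner_det R"
  shows "(a, C) \<in> R \<star> S \<longleftrightarrow> (\<exists>b. (a, {b}) \<in> R \<and> (b, C) \<in> S)"
proof
  assume "(a, C) \<in> R \<star> S"
  then obtain B f where B: "(a, B) \<in> R" and f: "\<forall>b\<in>B. (b, f b) \<in> S" and C: "C = (\<Union>b\<in>B. f b)"
    unfolding peleg_comp_def by blast
  from B assms obtain b where "B = {b}" unfolding inner_det_def by blast
  then show "\<exists>b. (a, {b}) \<in> R \<and> (b, C) \<in> S" using B f C by auto
next
  assume "\<exists>b. (a, {b}) \<in> R \<and> (b, C) \<in> S"
  then obtain b where "(a, {b}) \<in> R" "(b, C) \<in> S" by blast
  then show "(a, C) \<in> R \<star> S" unfolding peleg_comp_def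
    by (auto intro!: exI[of _ "{b}"] exI[of _ "\<lambda>_. C"])
qed

lemma pI: "(a, B) \<in> R \<Longrightarrow> \<forall>b\<in>B. (b, f b) \<in> S \<Longrightarrow> (a, \<Union>b\<in>B. f b) \<in> R \<star> S"
  unfolding peleg_comp_def by blast

lemma pE: "(a, C) \<in> R \<star> S \<Longrightarrow> (\<And>B f. (a, B) \<in> R \<Longrightarrow> \<forall>b\<in>B. (b, f b) \<in> S \<Longrightarrow> C = (\<Union>b\<in>B. f b) \<Longrightarrow> P) \<Longrightarrow> P"
  unfolding peleg_comp_def by blast

theorem lemma3p10:
  fixes R :: "('x \<times> 'y set) set" and S :: "('y \<times> 'z set) set"
    and T :: "('z \<times> 'w set) set"
  assumes "inner_det R"
  shows "R \<star> S = R O (mr_id :: ('y \<times> 'y set) set)\<inverse> O S \<and>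
         R \<star> (S \<star> T) = (R \<star> S) \<star> T"
proof
  show "R \<star> S = R O (mr_id :: ('y \<times> 'y set) set)\<inverse> O S"
  proof (rule set_eqI, clarify)
    fix a C
    note k = key[OF assms, of a C S]
    show "(a, C) \<in> R \<star> S \<longleftrightarrow> (a, C) \<in> R O (mr_id :: ('y \<times> 'y set) set)\<inverse> O S"
    proof
      assume "(a, C) \<in> R \<star> S"
      then obtain b where b: "(a, {b}) \<in> R" "(b, C) \<in> S" using k by blast
      have m: "({b}, b) \<in> (mr_id :: ('y \<times> 'y set) set)\<inverse>" unfolding mr_id_def by simp
      show "(a, C) \<in> R O (mr_id :: ('y \<times> 'y set) set)\<inverse> O S"
        by (rule relcompI[OF b(1) relcompI[OF m b(2)]])
    next
      assume "(a, C) \<in> R O (mr_id :: ('y \<times> 'y set) set)\<inverse> O S"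
      then obtain B b where ab: "(a, B) \<in> R" "(B, b) \<in> (mr_id :: ('y \<times> 'y set) set)\<inverse>" "(b, C) \<in> S"
        by (elim relcompE) auto
      then have "B = {b}" unfolding mr_id_def by simp
      then show "(a, C) \<in> R \<star> S" using k ab(1,3) by auto
    qed
  qed
next
  show "R \<star> (S \<star> T) = (R \<star> S) \<star> T"
  proof (rule set_eqI, clarify)
    fix a C
    show "(a, C) \<in> R \<star> (S \<star> T) \<longleftrightarrow> (a, C) \<in> (R \<star> S) \<star> T"
    proof
      assume "(a, C) \<in> R \<star> (S \<star> T)"
      then obtain b where b: "(a, {b}) \<in> R" "(b, C) \<in> S \<star> T"
        using key[OF assms, of a C "S \<star> T"] by blast
      then obtain B f where bb: "(b, B) \<in> S" and f: "\<forall>x\<in>B. (x, f x) \<in> T" and C: "C = (\<Union>x\<in>B. f x)"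
        by (auto elim: pE)
      have aB: "(a, B) \<in> R \<star> S" using key[OF assms, of a B S] b(1) bb by blast
      show "(a, C) \<in> (R \<star> S) \<star> T" using pI[OF aB f] C by simp
    next
      assume "(a, C) \<in> (R \<star> S) \<star> T"
      then obtain B f where B: "(a, B) \<in> R \<star> S" and f: "\<forall>x\<in>B. (x, f x) \<in> T" and C: "C = (\<Union>x\<in>B. f x)"
        by (rule pE)
      from B obtain b where b: "(a, {b}) \<in> R" "(b, B) \<in> S" using key[OF assms, of a B S] by blast
      have "(b, C) \<in> S \<star> T" using pI[OF b(2) f] C by simp
      then show "(a, C) \<in> R \<star> (S \<star> T)" using key[OF assms, of a C "S \<star> T"] b(1) by blast
    qed
  qed
qed

end
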